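(* (1) For each $p\ge 3$ there is an instance with $p$ binary attributes and $k=2$ such that the set of committees optimal for $\|\cdot\|_1$ and the set of committees optimal for $\|\cdot\|_{\max}$ are disjoint. (2) For each $p\ge 3$ there is an instance with $p$ attributes such that the set of committees optimal for $\|\cdot\|_{\max}$ and the set of committees optimal for $\|\cdot\|_{1,\max}$ are disjoint. (3) For each $p\ge 2$ there is an instance with $p$ attributes, at least one of which has a domain with $4$ values, such that the set of committees optimal for $\|\cdot\|_1$ and the set of committees optimal for $\|\cdot\|_{1,\max}$ are disjoint. (4) There is an instance with $p=2$ binary attributes such that the set of committees optimal for $\|\cdot\|_1$ differs from the set of committees optimal for $\|\cdot\|_{\max}$.
   Context: An instance consists of attributes $X_1,\dots,X_p$, each $X_i$ with finite domain $D_i=\{x_i^1,\dots,x_i^{q_i}\}$ (binary means $|D_i|=2$); a candidate database, i.e. a finite set $C$ in which each candidate $c$ has a value vector $(X_1(c),\dots,X_p(c))\in D_1\times\dots\times D_p$ (different candidates may share a vector); a target distribution $\pi=(\pi_1,\dots,\pi_p)$ with $\pi_i=(\pi_i^1,\dots,\pi_i^{q_i})$ nonnegative reals summing to $1$; and an integer $k\in\{1,\dots,|C|\}$. For $A\subseteq C$ with $|A|=k$, $r_i^j(A)=|\{c\in A: X_i(c)=x_i^j\}|/k$. Loss functions: $\|\pi,r(A)\|_1=\sum_{i,j}|r_i^j(A)-\pi_i^j|$; $\|\pi,r(A)\|_{1,\max}=\sum_i\max_j|r_i^j(A)-\pi_i^j|$; $\|\pi,r(A)\|_{\max}=\max_{i,j}|r_i^j(A)-\pi_i^j|$.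 A committee of size $k$ is optimal for a loss $f$ if it minimizes $f(\pi,r(A))$ over all $k$-element subsets of $C$. *)

theory Defs
  imports Complex_Main
begin

(* An instance: p attributes indexed 0..<p; attribute i has domain {0..<q i}
   (value j stands for x_i^(j+1)); candidates form a finite set C :: nat set;
   X c i is the value of attribute i for candidate c; tgt i j is the target
   proportion of value j of attribute i; k is the committee size. *)

definition valid_instance ::
  "nat \<Rightarrow> (nat \<Rightarrow> nat) \<Rightarrow> nat set \<Rightarrow> (nat \<Rightarrow> nat \<Rightarrow> nat)
   \<Rightarrow> (nat \<Rightarrow> nat \<Rightarrow> real) \<Rightarrow> nat \<Rightarrow> bool" where
  "valid_instance p q C X tgt k \<longleftrightarrow>
     finite C \<and>
     (\<forall>c\<in>C. \<forall>i<p. X c i < q i) \<and>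
     (\<forall>i<p. (\<forall>j<q i. tgt i j \<ge> 0) \<and> (\<Sum>j<q i. tgt i j) = 1) \<and>
     1 \<le> k \<and> k \<le> card C"

definition ratio :: "(nat \<Rightarrow> nat \<Rightarrow> nat) \<Rightarrow> nat \<Rightarrow> nat set \<Rightarrow> nat \<Rightarrow> nat \<Rightarrow> real" where
  "ratio X k A i j = real (card {c\<in>A. X c i = j}) / real k"

definition loss_1 ::
  "nat \<Rightarrow> (nat \<Rightarrow> nat) \<Rightarrow> (nat \<Rightarrow> nat \<Rightarrow> real) \<Rightarrow> (nat \<Rightarrow> nat \<Rightarrow> nat) \<Rightarrow> nat \<Rightarrow> nat set \<Rightarrow> real" where
  "loss_1 p q tgt X k A = (\<Sum>i<p. \<Sum>j<q i. \<bar>ratio X k A i j - tgt i j\<bar>)"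

definition loss_1max ::
  "nat \<Rightarrow> (nat \<Rightarrow> nat) \<Rightarrow> (nat \<Rightarrow> nat \<Rightarrow> real) \<Rightarrow> (nat \<Rightarrow> nat \<Rightarrow> nat) \<Rightarrow> nat \<Rightarrow> nat set \<Rightarrow> real" where
  "loss_1max p q tgt X k A = (\<Sum>i<p. Max {\<bar>ratio X k A i j - tgt i j\<bar> | j. j < q i})"

definition loss_max ::
  "nat \<Rightarrow> (nat \<Rightarrow> nat) \<Rightarrow> (nat \<Rightarrow> nat \<Rightarrow> real) \<Rightarrow> (nat \<Rightarrow> nat \<Rightarrow> nat) \<Rightarrow> nat \<Rightarrow> nat set \<Rightarrow> real" where
  "loss_max p q tgt X k A = Max {\<bar>ratio X k A i j - tgt i j\<bar> | i j. i < p \<and> j < q i}"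

definition optimal_committees :: "(nat set \<Rightarrow> real) \<Rightarrow> nat set \<Rightarrow> nat \<Rightarrow> nat set set" where
  "optimal_committees f C k =
     {A. A \<subseteq> C \<and> card A = k \<and> (\<forall>B. B \<subseteq> C \<and> card B = k \<longrightarrow> f A \<le> f B)}"

end

theory Submission imports Defs begin

lemma two_subsets:
  assumes "A \<subseteq> {0,1,2::nat}" "card A = 2"
  shows "A = {0,1} \<or> A = {0,2} \<or> A = {1,2}"
proof -
  obtain x y where "A = {x,y}" "x \<noteq> y" using assms(2) by (meson card_2_iff)
  moreover have "x = 0 \<or> x = 1 \<or> x = 2" "y = 0 \<or> y = 1 \<or> y = 2"
    using assms(1) \<open>A = {x,y}\<close> by auto
  ultimately show ?thesis by (elim disjE) (simp_all add: insert_commute)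
qed

lemma card_pair_filter:
  assumes "a \<noteq> b"
  shows "card {c\<in>{a,b}. P c} = (if P a then 1 else 0) + (if P b then 1 else 0)"
proof -
  have "{c\<in>{a,b}. P c} = (if P a then {a} else {}) \<union> (if P b then {b} else {})" by auto
  thus ?thesis using assms by auto
qed

lemma sum_pad:
  fixes m p :: nat
  assumes "m \<le> p" "\<And>i. m \<le> i \<Longrightarrow> f i = 0"
  shows "(\<Sum>i<p. f i) = (\<Sum>i<m. f i)"
proof (rule sum.mono_neutral_right)
  show "{..<m} \<subseteq> {..<p}" using assms(1) by auto
  show "\<forall>i\<in>{..<p} - {..<m}. f i = 0" using assms(2) by auto
qed simp

lemma fin_set2: "finite {f i j | i j. i < (p::nat) \<and> j < (q i::nat)}"
proof -
  have "{f i j | i j. i < p \<and> j < q i} = (\<Union>i<p. (\<lambda>j. f i j) ` {..<q i})" by blast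
  thus ?thesis by simp
qed

lemma loss_max_ge:
  assumes "i < p" "j < q i"
  shows "\<bar>ratio X k A i j - tgt i j\<bar> \<le> loss_max p q tgt X k A"
  unfolding loss_max_def by (rule Max_ge[OF fin_set2]) (use assms in blast)

lemma loss_max_le:
  assumes "0 < p" "0 < q 0" "\<And>i j. i < p \<Longrightarrow> j < q i \<Longrightarrow> \<bar>ratio X k A i j - tgt i j\<bar> \<le> b"
  shows "loss_max p q tgt X k A \<le> b"
  unfolding loss_max_def
proof (subst Max_le_iff[OF fin_set2])
  show "{\<bar>ratio X k A i j - tgt i j\<bar> | i j. i < p \<and> j < q i} \<noteq> {}" using assms(1,2) by blast
  show "\<forall>a\<in>{\<bar>ratio X k A i j - tgt i j\<bar> | i j. i < p \<and> j < q i}. a \<le> b" using assms(3) by blast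
qed

lemma set_img: "{f j | j. j < (n::nat)} = f ` {..<n}" by auto

lemma Max_j2: "Max {f j | j. j < (2::nat)} = max (f 0) (f (1::nat))"
proof -
  have "{..<(2::nat)} = {0,1}" by auto
  thus ?thesis by (simp add: set_img)
qed

lemma Max_j1: "Max {f j | j. j < (1::nat)} = f 0"
  by (simp add: set_img)

lemma Max_j4: "Max {f j | j. j < (4::nat)} = max (f 0) (max (f 1) (max (f 2) (f (3::nat))))"
proof -
  have "{..<(4::nat)} = {0,1,2,3}" by auto
  thus ?thesis by (simp add: set_img max.assoc)
qed

lemma disj_crit:
  assumes "\<And>A. A \<subseteq> C \<Longrightarrow> card A = k \<Longrightarrow>
     (\<exists>B. B \<subseteq> C \<and> card B = k \<and> f B < f A) \<or> (\<exists>B. B \<subseteq> C \<and> card B = k \<and> g B < g A)"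
  shows "optimal_committees f C k \<inter> optimal_committees g C k = {}"
proof (rule ccontr)
  assume "optimal_committees f C k \<inter> optimal_committees g C k \<noteq> {}"
  then obtain A where A: "A \<in> optimal_committees f C k" "A \<in> optimal_committees g C k" by blast
  have Af: "A \<subseteq> C" "card A = k" "\<And>B. B \<subseteq> C \<Longrightarrow> card B = k \<Longrightarrow> f A \<le> f B"
    using A(1) unfolding optimal_committees_def by auto
  have Ag: "\<And>B. B \<subseteq> C \<Longrightarrow> card B = k \<Longrightarrow> g A \<le> g B"
    using A(2) unfolding optimal_committees_def by auto
  from assms[OF Af(1,2)] show False
  proof (elim disjE exE conjE)
    fix B assume "B \<subseteq> C" "card B = k" "f B < f A"
    with Af(3)[of B] show False by simp
  next
    fix B assume "B \<subseteq> C" "card B = k" "g B < g A"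
    with Ag[of B] show False by simp
  qed
qed

definition X1 :: "nat \<Rightarrow> nat \<Rightarrow> nat" where
  "X1 c i = (if c = 2 \<and> i < 3 then 1 else 0)"
definition a1 :: "nat \<Rightarrow> real" where
  "a1 i = (if i = 0 then 0 else if i = 1 then 7/8 else 1)"
definition t1 :: "nat \<Rightarrow> nat \<Rightarrow> real" where
  "t1 i j = (if j = 0 then a1 i else 1 - a1 i)"

lemma r1_01: "ratio X1 2 {0,Suc 0} i j = (if j = 0 then 1 else 0)"
  unfolding ratio_def by (subst card_pair_filter) (auto simp add: X1_def)
lemma r1_02: "j < 2 \<Longrightarrow> ratio X1 2 {0,2} i j = (if i < 3 then 1/2 else if j = 0 then 1 else 0)"
  unfolding ratio_def by (subst card_pair_filter) (auto simp add: X1_def less_2_cases_iff)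
lemma r1_12: "j < 2 \<Longrightarrow> ratio X1 2 {Suc 0,2} i j = (if i < 3 then 1/2 else if j = 0 then 1 else 0)"
  unfolding ratio_def by (subst card_pair_filter) (auto simp add: X1_def less_2_cases_iff)

lemma sum3: "(\<Sum>i<(3::nat). f i) = f 0 + f 1 + f 2"
  by (simp add: eval_nat_numeral)
lemma sum2: "(\<Sum>i<(2::nat). f i) = f 0 + f 1"
  by (simp add: eval_nat_numeral)
lemma sum4: "(\<Sum>i<(4::nat). f i) = f 0 + f 1 + f 2 + f 3"
  by (simp add: eval_nat_numeral)

lemma L1_01: assumes "3 \<le> p" shows "loss_1 p (\<lambda>_. 2) t1 X1 2 {0,1} = 9/4"
proof -
  have "loss_1 p (\<lambda>_. 2) t1 X1 2 {0,1} = (\<Sum>i<3. \<Sum>j<2. \<bar>ratio X1 2 {0,1} i j - t1 i j\<bar>)"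
    unfolding loss_1_def
    by (rule sum_pad[OF assms]) (auto intro!: sum.neutral simp: r1_01 t1_def a1_def)
  also have "\<dots> = 9/4" by (simp add: sum3 sum2 r1_01 t1_def a1_def)
  finally show ?thesis .
qed

lemma M1_01: assumes "3 \<le> p" shows "loss_1max p (\<lambda>_. 2) t1 X1 2 {0,1} = 9/8"
proof -
  have "loss_1max p (\<lambda>_. 2) t1 X1 2 {0,1} = (\<Sum>i<3. max \<bar>ratio X1 2 {0,1} i 0 - t1 i 0\<bar> \<bar>ratio X1 2 {0,1} i 1 - t1 i 1\<bar>)"
    unfolding loss_1max_def Max_j2
    by (rule sum_pad[OF assms]) (auto simp: r1_01 t1_def a1_def)
  also have "\<dots> = 9/8" by (simp add: sum3 r1_01 t1_def a1_def)
  finally show ?thesis .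
qed

lemma L1_02: assumes "3 \<le> p" shows "loss_1 p (\<lambda>_. 2) t1 X1 2 {0,2} = 11/4"
proof -
  have "loss_1 p (\<lambda>_. 2) t1 X1 2 {0,2} = (\<Sum>i<3. \<Sum>j<2. \<bar>ratio X1 2 {0,2} i j - t1 i j\<bar>)"
    unfolding loss_1_def
    by (rule sum_pad[OF assms]) (auto intro!: sum.neutral simp: r1_02 t1_def a1_def)
  also have "\<dots> = 11/4" by (simp add: sum3 sum2 r1_02 t1_def a1_def)
  finally show ?thesis .
qed

lemma M1_02: assumes "3 \<le> p" shows "loss_1max p (\<lambda>_. 2) t1 X1 2 {0,2} = 11/8"
proof -
  have "loss_1max p (\<lambda>_. 2) t1 X1 2 {0,2} = (\<Sum>i<3. max \<bar>ratio X1 2 {0,2} i 0 - t1 i 0\<bar> \<bar>ratio X1 2 {0,2} i 1 - t1 i 1\<bar>)"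
    unfolding loss_1max_def Max_j2
    by (rule sum_pad[OF assms]) (auto simp: r1_02 t1_def a1_def)
  also have "\<dots> = 11/8" by (simp add: sum3 r1_02 t1_def a1_def)
  finally show ?thesis .
qed

lemma L1_12: assumes "3 \<le> p" shows "loss_1 p (\<lambda>_. 2) t1 X1 2 {1,2} = 11/4"
proof -
  have "loss_1 p (\<lambda>_. 2) t1 X1 2 {1,2} = (\<Sum>i<3. \<Sum>j<2. \<bar>ratio X1 2 {1,2} i j - t1 i j\<bar>)"
    unfolding loss_1_def
    by (rule sum_pad[OF assms]) (auto intro!: sum.neutral simp: r1_12 t1_def a1_def)
  also have "\<dots> = 11/4" by (simp add: sum3 sum2 r1_12 t1_def a1_def)
  finally show ?thesis .
qed

lemma M1_12: assumes "3 \<le> p" shows "loss_1max p (\<lambda>_. 2) t1 X1 2 {1,2} = 11/8"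
proof -
  have "loss_1max p (\<lambda>_. 2) t1 X1 2 {1,2} = (\<Sum>i<3. max \<bar>ratio X1 2 {1,2} i 0 - t1 i 0\<bar> \<bar>ratio X1 2 {1,2} i 1 - t1 i 1\<bar>)"
    unfolding loss_1max_def Max_j2
    by (rule sum_pad[OF assms]) (auto simp: r1_12 t1_def a1_def)
  also have "\<dots> = 11/8" by (simp add: sum3 r1_12 t1_def a1_def)
  finally show ?thesis .
qed

lemma X1_01: "3 \<le> p \<Longrightarrow> 1 \<le> loss_max p (\<lambda>_. 2) t1 X1 2 {0,1}"
  using loss_max_ge[of 0 p 0 "\<lambda>_. 2" X1 2 "{0,1}" t1]
  by (simp add: r1_01 t1_def a1_def)
lemma X1_02: "3 \<le> p \<Longrightarrow> loss_max p (\<lambda>_. 2) t1 X1 2 {0,2} \<le> 1/2"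
  by (rule loss_max_le) (auto simp: r1_02 t1_def a1_def less_2_cases_iff)
lemma X1_12: "3 \<le> p \<Longrightarrow> loss_max p (\<lambda>_. 2) t1 X1 2 {1,2} \<le> 1/2"
  by (rule loss_max_le) (auto simp: r1_12 t1_def a1_def less_2_cases_iff)

lemma valid1: "3 \<le> p \<Longrightarrow> valid_instance p (\<lambda>_. 2) {0,1,2} X1 t1 2"
  unfolding valid_instance_def
  by (auto simp: X1_def t1_def a1_def eval_nat_numeral)

lemma part1: "\<forall>p\<ge>3. \<exists>q C X tgt.
      valid_instance p q C X tgt 2 \<and> (\<forall>i<p. q i = 2) \<and>
      optimal_committees (loss_1 p q tgt X 2) C 2 \<inter>
      optimal_committees (loss_max p q tgt X 2) C 2 = {}"
proof (intro allI impI)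
  fix p :: nat assume p: "3 \<le> p"
  have "optimal_committees (loss_1 p (\<lambda>_. 2) t1 X1 2) {0,1,2} 2 \<inter>
      optimal_committees (loss_max p (\<lambda>_. 2) t1 X1 2) {0,1,2} 2 = {}"
  proof (rule disj_crit)
    fix A assume A: "A \<subseteq> {0,1,2::nat}" "card A = 2"
    from two_subsets[OF A] show "(\<exists>B. B \<subseteq> {0,1,2} \<and> card B = 2 \<and> loss_1 p (\<lambda>_. 2) t1 X1 2 B < loss_1 p (\<lambda>_. 2) t1 X1 2 A) \<or>
      (\<exists>B. B \<subseteq> {0,1,2} \<and> card B = 2 \<and> loss_max p (\<lambda>_. 2) t1 X1 2 B < loss_max p (\<lambda>_. 2) t1 X1 2 A)"
    proof (elim disjE)
      assume "A = {0,1}" thus ?thesis using X1_01[OF p] X1_02[OF p]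
        by (intro disjI2 exI[of _ "{0,2}"]) auto
    next
      assume "A = {0,2}" thus ?thesis using L1_01[OF p] L1_02[OF p]
        by (intro disjI1 exI[of _ "{0,1}"]) auto
    next
      assume "A = {1,2}" thus ?thesis using L1_01[OF p] L1_12[OF p]
        by (intro disjI1 exI[of _ "{0,1}"]) auto
    qed
  qed
  thus "\<exists>q C X tgt.
      valid_instance p q C X tgt 2 \<and> (\<forall>i<p. q i = 2) \<and>
      optimal_committees (loss_1 p q tgt X 2) C 2 \<inter>
      optimal_committees (loss_max p q tgt X 2) C 2 = {}"
    using valid1[OF p] by blast
qed

lemma part2: "\<forall>p\<ge>3. \<exists>q C X tgt k.
      valid_instance p q C X tgt k \<and>
      optimal_committees (loss_max p q tgt X k) C k \<inter>
      optimal_committees (loss_1max p q tgt X k) C k = {}"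
proof (intro allI impI)
  fix p :: nat assume p: "3 \<le> p"
  have "optimal_committees (loss_max p (\<lambda>_. 2) t1 X1 2) {0,1,2} 2 \<inter>
      optimal_committees (loss_1max p (\<lambda>_. 2) t1 X1 2) {0,1,2} 2 = {}"
  proof (rule disj_crit)
    fix A assume A: "A \<subseteq> {0,1,2::nat}" "card A = 2"
    from two_subsets[OF A] show "(\<exists>B. B \<subseteq> {0,1,2} \<and> card B = 2 \<and> loss_max p (\<lambda>_. 2) t1 X1 2 B < loss_max p (\<lambda>_. 2) t1 X1 2 A) \<or>
      (\<exists>B. B \<subseteq> {0,1,2} \<and> card B = 2 \<and> loss_1max p (\<lambda>_. 2) t1 X1 2 B < loss_1max p (\<lambda>_. 2) t1 X1 2 A)"
    proof (elim disjE)
      assume "A = {0,1}" thus ?thesis using X1_01[OF p] X1_02[OF p]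
        by (intro disjI1 exI[of _ "{0,2}"]) auto
    next
      assume "A = {0,2}" thus ?thesis using M1_01[OF p] M1_02[OF p]
        by (intro disjI2 exI[of _ "{0,1}"]) auto
    next
      assume "A = {1,2}" thus ?thesis using M1_01[OF p] M1_12[OF p]
        by (intro disjI2 exI[of _ "{0,1}"]) auto
    qed
  qed
  thus "\<exists>q C X tgt k.
      valid_instance p q C X tgt k \<and>
      optimal_committees (loss_max p q tgt X k) C k \<inter>
      optimal_committees (loss_1max p q tgt X k) C k = {}"
    using valid1[OF p] by blast
qed


lemma ratio_pair: "a \<noteq> b \<Longrightarrow> ratio X k {a,b} i j =
   ((if X a i = j then 1 else 0) + (if X b i = j then 1 else 0)) / real k"
  unfolding ratio_def by (subst card_pair_filter) auto

definition X3 :: "nat \<Rightarrow> nat \<Rightarrow> nat" where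
  "X3 c i = (if i = 0 then (if c = 0 then 2 else if c = 1 then 1 else 3)
             else if i = 1 then (if c = 1 then 1 else 0) else 0)"
definition q3 :: "nat \<Rightarrow> nat" where
  "q3 i = (if i = 0 then 4 else if i = 1 then 2 else 1)"
definition t3 :: "nat \<Rightarrow> nat \<Rightarrow> real" where
  "t3 i j = (if i = 0 then (if j = 0 then 3/8 else if j = 1 then 5/8 else 0)
             else if i = 1 then (if j = 0 then 7/8 else if j = 1 then 1/8 else 0)
             else (if j = 0 then 1 else 0))"

lemma valid3: "2 \<le> p \<Longrightarrow> valid_instance p q3 {0,1,2} X3 t3 2"
  unfolding valid_instance_def
  by (auto simp: X3_def q3_def t3_def sum4 sum2)

lemma L3: assumes "2 \<le> p" "A \<in> {{0,1},{0,2},{1,2}}"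
  shows "loss_1 p q3 t3 X3 2 A = (\<Sum>i<2. \<Sum>j<q3 i. \<bar>ratio X3 2 A i j - t3 i j\<bar>)"
  unfolding loss_1_def
  by (rule sum_pad[OF assms(1)]) (use assms(2) in \<open>auto simp: q3_def t3_def ratio_pair X3_def\<close>)

lemma M3: assumes "2 \<le> p" "A \<in> {{0,1},{0,2},{1,2}}"
  shows "loss_1max p q3 t3 X3 2 A = (\<Sum>i<2. Max {\<bar>ratio X3 2 A i j - t3 i j\<bar> | j. j < q3 i})"
  unfolding loss_1max_def
  by (rule sum_pad[OF assms(1)]) (use assms(2) in \<open>auto simp: q3_def t3_def ratio_pair X3_def Max_j1\<close>)

lemma L3_01: "2 \<le> p \<Longrightarrow> loss_1 p q3 t3 X3 2 {0,1} = 7/4"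
  by (subst L3) (auto simp: sum2 sum4 q3_def t3_def ratio_pair X3_def)
lemma L3_02: "2 \<le> p \<Longrightarrow> loss_1 p q3 t3 X3 2 {0,2} = 9/4"
  by (subst L3) (auto simp: sum2 sum4 q3_def t3_def ratio_pair X3_def)
lemma L3_12: "2 \<le> p \<Longrightarrow> loss_1 p q3 t3 X3 2 {1,2} = 7/4"
  by (subst L3) (auto simp: sum2 sum4 q3_def t3_def ratio_pair X3_def)
lemma M3_01: "2 \<le> p \<Longrightarrow> loss_1max p q3 t3 X3 2 {0,1} = 7/8"
  by (subst M3) (auto simp: sum2 Max_j2 Max_j4 q3_def t3_def ratio_pair X3_def)
lemma M3_02: "2 \<le> p \<Longrightarrow> loss_1max p q3 t3 X3 2 {0,2} = 3/4"
  by (subst M3) (auto simp: sum2 Max_j2 Max_j4 q3_def t3_def ratio_pair X3_def)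
lemma M3_12: "2 \<le> p \<Longrightarrow> loss_1max p q3 t3 X3 2 {1,2} = 7/8"
  by (subst M3) (auto simp: sum2 Max_j2 Max_j4 q3_def t3_def ratio_pair X3_def)


lemma part3: "\<forall>p\<ge>2. \<exists>q C X tgt k.
      valid_instance p q C X tgt k \<and> (\<exists>i<p. q i = 4) \<and>
      optimal_committees (loss_1 p q tgt X k) C k \<inter>
      optimal_committees (loss_1max p q tgt X k) C k = {}"
proof (intro allI impI)
  fix p :: nat assume p: "2 \<le> p"
  have "optimal_committees (loss_1 p q3 t3 X3 2) {0,1,2} 2 \<inter>
      optimal_committees (loss_1max p q3 t3 X3 2) {0,1,2} 2 = {}"
  proof (rule disj_crit)
    fix A assume A: "A \<subseteq> {0,1,2::nat}" "card A = 2"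
    from two_subsets[OF A] show "(\<exists>B. B \<subseteq> {0,1,2} \<and> card B = 2 \<and> loss_1 p q3 t3 X3 2 B < loss_1 p q3 t3 X3 2 A) \<or>
      (\<exists>B. B \<subseteq> {0,1,2} \<and> card B = 2 \<and> loss_1max p q3 t3 X3 2 B < loss_1max p q3 t3 X3 2 A)"
    proof (elim disjE)
      assume "A = {0,1}" thus ?thesis using M3_01[OF p] M3_02[OF p]
        by (intro disjI2 exI[of _ "{0,2}"]) auto
    next
      assume "A = {0,2}" thus ?thesis using L3_01[OF p] L3_02[OF p]
        by (intro disjI1 exI[of _ "{0,1}"]) auto
    next
      assume "A = {1,2}" thus ?thesis using M3_12[OF p] M3_02[OF p]
        by (intro disjI2 exI[of _ "{0,2}"]) auto
    qed
  qed
  moreover have "\<exists>i<p. q3 i = 4" using p by (intro exI[of _ 0]) (simp add: q3_def)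
  ultimately show "\<exists>q C X tgt k.
      valid_instance p q C X tgt k \<and> (\<exists>i<p. q i = 4) \<and>
      optimal_committees (loss_1 p q tgt X k) C k \<inter>
      optimal_committees (loss_1max p q tgt X k) C k = {}"
    using valid3[OF p] by blast
qed

definition X4 :: "nat \<Rightarrow> nat \<Rightarrow> nat" where
  "X4 c i = (if c = 2 \<and> i = 1 then 1 else 0)"
definition t4 :: "nat \<Rightarrow> nat \<Rightarrow> real" where
  "t4 i j = (if j = 0 then 0 else 1)"

lemma L4_01: "loss_1 2 (\<lambda>_. 2) t4 X4 2 {0,1} = 4"
  unfolding loss_1_def by (simp add: sum2 t4_def ratio_pair X4_def)
lemma L4_02: "loss_1 2 (\<lambda>_. 2) t4 X4 2 {0,2} = 3"
  unfolding loss_1_def by (simp add: sum2 t4_def ratio_pair X4_def)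
lemma X4_01: "loss_max 2 (\<lambda>_. 2) t4 X4 2 {0,1} \<le> 1"
  by (rule loss_max_le) (auto simp: t4_def ratio_pair X4_def less_2_cases_iff)
lemma X4_B: assumes "card B = 2" shows "1 \<le> loss_max 2 (\<lambda>_. 2) t4 X4 2 B"
proof -
  have "{c\<in>B. X4 c 0 = 0} = B" by (auto simp: X4_def)
  hence "ratio X4 2 B 0 0 = 1" using assms by (simp add: ratio_def)
  thus ?thesis using loss_max_ge[of 0 2 0 "\<lambda>_. 2" X4 2 B t4] by (simp add: t4_def)
qed

lemma valid4: "valid_instance 2 (\<lambda>_. 2) {0,1,2} X4 t4 2"
  unfolding valid_instance_def
  by (auto simp: X4_def t4_def sum2)

lemma part4: "\<exists>q C X tgt k.
      valid_instance 2 q C X tgt k \<and> (\<forall>i<2. q i = 2) \<and>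
      optimal_committees (loss_1 2 q tgt X k) C k \<noteq>
      optimal_committees (loss_max 2 q tgt X k) C k"
proof -
  have in_max: "{0,1} \<in> optimal_committees (loss_max 2 (\<lambda>_. 2) t4 X4 2) {0,1,2} 2"
    unfolding optimal_committees_def using X4_01 X4_B by fastforce
  have nin1: "{0,1} \<notin> optimal_committees (loss_1 2 (\<lambda>_. 2) t4 X4 2) {0,1,2} 2"
  proof
    assume "{0,1} \<in> optimal_committees (loss_1 2 (\<lambda>_. 2) t4 X4 2) {0,1,2} 2"
    hence "loss_1 2 (\<lambda>_. 2) t4 X4 2 {0,1} \<le> loss_1 2 (\<lambda>_. 2) t4 X4 2 {0,2}"
      unfolding optimal_committees_def by auto
    thus False using L4_01 L4_02 by simp
  qed
  have "optimal_committees (loss_1 2 (\<lambda>_. 2) t4 X4 2) {0,1,2} 2 \<noteq>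
      optimal_committees (loss_max 2 (\<lambda>_. 2) t4 X4 2) {0,1,2} 2"
    using in_max nin1 by blast
  thus ?thesis using valid4 by blast
qed

theorem proposition2:
  shows
  "(\<forall>p\<ge>3. \<exists>q C X tgt.
      valid_instance p q C X tgt 2 \<and> (\<forall>i<p. q i = 2) \<and>
      optimal_committees (loss_1 p q tgt X 2) C 2 \<inter>
      optimal_committees (loss_max p q tgt X 2) C 2 = {})
   \<and>
   (\<forall>p\<ge>3. \<exists>q C X tgt k.
      valid_instance p q C X tgt k \<and>
      optimal_committees (loss_max p q tgt X k) C k \<inter>
      optimal_committees (loss_1max p q tgt X k) C k = {})
   \<and>
   (\<forall>p\<ge>2. \<exists>q C X tgt k.
      valid_instance p q C X tgt k \<and> (\<exists>i<p. q i = 4) \<and>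
      optimal_committees (loss_1 p q tgt X k) C k \<inter>
      optimal_committees (loss_1max p q tgt X k) C k = {})
   \<and>
   (\<exists>q C X tgt k.
      valid_instance 2 q C X tgt k \<and> (\<forall>i<2. q i = 2) \<and>
      optimal_committees (loss_1 2 q tgt X k) C k \<noteq>
      optimal_committees (loss_max 2 q tgt X k) C k)"
  using part1 part2 part3 part4 by blast

end
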